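(* Let $f_\lambda$ be a probability density on $(0,\infty)$ with finite mean $\mu_\lambda$. Let $P_p$ be a probability distribution on $\{1,\dots,N\}$ with mean $E_p[n]=\sum_n n\,P_p(n)$, and for each $n$ let $g(\cdot\mid n)$ be a probability distribution on $\{0,1,\dots,N\}$ with mean $\overline{g}(n)=\sum_m m\,g(m\mid n)$. Consider random variables $(N_p,N_a,X,T)$ such that: $P\{N_p=n\}=\frac{n}{E_p[n]}P_p(n)$; conditionally on $N_p=n$, $N_a$ has distribution $g(\cdot\mid n)$; conditionally on $N_a=m$, $X$ is distributed as $\lambda_1+\dots+\lambda_m$ with $\lambda_1,\dots,\lambda_m$ i.i.d. with density $f_\lambda$ ($X=0$ if $m=0$); conditionally on $X=x$, $T$ is exponentially distributed with rate $x$ ($T=+\infty$ if $x=0$). Then for every $TTL\ge 0$, $$P\{T\le TTL\}\ \le\ 1-\frac{1}{E_p[n]}\,E_p\!\left[n\, e^{-\overline{g}(n)\,\mu_\lambda\,TTL}\right],$$ where $E_p[h(n)]=\sum_n h(n)P_p(n)$.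
   Context: This models the content access time $T$ of a random content request in an opportunistic network: $P_p(n)$ is the fraction of contents requested by exactly $n$ nodes (content popularity distribution), $g(m\mid n)$ is the probability that a content of popularity $n$ is held by $m$ nodes, $f_\lambda$ is the distribution of pairwise contact rates (inter-contact times exponential), and $X$ is the sum of contact rates between the requester and the holders; $P\{T\le TTL\}$ is the probability the content is accessed by deadline $TTL$. *)

theory Defs
  imports "HOL-Probability.Probability"
begin

text \<open>Law of the sum \<open>\<lambda>_1 + ... + \<lambda>_m\<close> of m i.i.d. rates with density f
  (the empty sum, m = 0, gives the point mass at 0).\<close>
definition sum_law :: "(real \<Rightarrow> real) \<Rightarrow> nat \<Rightarrow> real measure" where
  "sum_law f m = distr (PiM {..<m} (\<lambda>_. density lborel (\<lambda>x. ennreal (f x)))) borel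
                       (\<lambda>l. \<Sum>i<m. l i)"

definition exp_law :: "real \<Rightarrow> ereal measure" where
  "exp_law x = (if x > 0 then distr (density lborel (\<lambda>t. ennreal (exponential_density x t))) borel ereal
                else return borel \<infinity>)"

definition Ep :: "nat pmf \<Rightarrow> nat \<Rightarrow> real" where
  "Ep Pp N = (\<Sum>n\<in>{1..N}. real n * pmf Pp n)"

definition Np_law :: "nat pmf \<Rightarrow> nat \<Rightarrow> nat measure" where
  "Np_law Pp N = density (count_space UNIV) (\<lambda>n. ennreal (real n * pmf Pp n / Ep Pp N))"

definition gbar :: "(nat \<Rightarrow> nat pmf) \<Rightarrow> nat \<Rightarrow> nat \<Rightarrow> real" where
  "gbar g N n = (\<Sum>m\<in>{0..N}. real m * pmf (g n) m)"

definition T_law :: "nat pmf \<Rightarrow> (nat \<Rightarrow> nat pmf) \<Rightarrow> (real \<Rightarrow> real) \<Rightarrow> nat \<Rightarrow> ereal measure" where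
  "T_law Pp g f N =
     Np_law Pp N \<bind> (\<lambda>n. measure_pmf (g n) \<bind> (\<lambda>m. sum_law f m \<bind> (\<lambda>x. exp_law x)))"

end

theory Submission
  imports Defs
begin


lemma exp_law_prob: "prob_space (exp_law x)"
  unfolding exp_law_def
  by (auto intro!: prob_space.prob_space_distr prob_space_exponential_density prob_space_return)

lemma sets_exp_law[simp]: "sets (exp_law x) = sets borel"
  unfolding exp_law_def by auto

lemma emeasure_exp_law:
  assumes X: "X \<in> sets (borel :: ereal measure)"
  shows "emeasure (exp_law x) X = (if x > 0 then
     (\<integral>\<^sup>+ t. ennreal (exponential_density x t) * indicator (ereal -` X) t \<partial>lborel)
     else indicator X \<infinity>)"
proof (cases "x > 0")
  case True
  have "ereal -` X \<in> sets borel" using measurable_sets[OF _ X, of ereal borel] by simp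
  then show ?thesis using True X unfolding exp_law_def
    by (simp add: emeasure_distr emeasure_density)
next
  case False
  then show ?thesis using X unfolding exp_law_def by simp
qed

lemma exp_law_measurable: "exp_law \<in> measurable borel (subprob_algebra borel)"
proof (rule measurable_subprob_algebra)
  fix a show "subprob_space (exp_law a)" using exp_law_prob prob_space_imp_subprob_space by blast
next
  fix a show "sets (exp_law a) = sets borel" by simp
next
  fix A :: "ereal set" assume A: "A \<in> sets borel"
  have [measurable]: "ereal -` A \<in> sets borel" using measurable_sets[OF _ A, of ereal borel] by simp
  show "(\<lambda>a. emeasure (exp_law a) A) \<in> borel_measurable borel"
    apply (subst emeasure_exp_law[OF A])
    unfolding exponential_density_def
    by measurable
qed

lemma emeasure_exp_law_le:
  assumes "TTL \<ge> 0"
  shows "emeasure (exp_law x) {.. ereal TTL} = ennreal (1 - exp (- max x 0 * TTL))"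
proof (cases "x > 0")
  case True
  have "ereal -` {.. ereal TTL} = {.. TTL}" by auto
  then have "emeasure (exp_law x) {.. ereal TTL} = emeasure (density lborel (exponential_density x)) {..TTL}"
    using True unfolding exp_law_def by (simp add: emeasure_distr)
  also have "\<dots> = ennreal (1 - exp (- x * TTL))"
    using True assms by (simp add: emeasure_erlang_density erlang_CDF_0)
  finally show ?thesis using True by simp
next
  case False
  then show ?thesis unfolding exp_law_def by simp
qed



lemma exp_tangent: "exp (-c) * (1 - (y - c)) \<le> exp (- (y::real))"
proof -
  have "1 + (c - y) \<le> exp (c - y)" by (rule exp_ge_add_one_self)
  then have "exp (-c) * (1 + (c - y)) \<le> exp (-c) * exp (c - y)" by simp
  also have "\<dots> = exp (-y)" by (simp add: exp_add[symmetric])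
  finally show ?thesis by (simp add: algebra_simps)
qed

lemma (in prob_space) exp_jensen:
  fixes Y :: "'a \<Rightarrow> real"
  assumes Y: "integrable M Y" and E: "integrable M (\<lambda>x. exp (- Y x))"
  shows "exp (- expectation Y) \<le> expectation (\<lambda>x. exp (- Y x))"
proof -
  let ?c = "expectation Y"
  have "expectation (\<lambda>x. exp (-?c) * (1 - (Y x - ?c))) \<le> expectation (\<lambda>x. exp (- Y x))"
  proof (rule Bochner_Integration.integral_mono)
    show "integrable M (\<lambda>x. exp (-?c) * (1 - (Y x - ?c)))" using Y by auto
  qed (use E exp_tangent in auto)
  also have "expectation (\<lambda>x. exp (-?c) * (1 - (Y x - ?c))) = exp (-?c) * (1 - (?c - ?c))"
    using Y by (simp add: prob_space)
  finally show ?thesis by simp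
qed



context
  fixes f :: "real \<Rightarrow> real"
  assumes f_meas[measurable]: "f \<in> borel_measurable borel"
    and f_nonneg: "\<And>x. f x \<ge> 0"
    and f_pos_support: "\<And>x. x \<le> 0 \<Longrightarrow> f x = 0"
    and f_int: "integrable lborel f"
    and f_prob: "(LINT x|lborel. f x) = 1"
    and f_mean: "integrable lborel (\<lambda>x. x * f x)"
begin

definition "Dm = density lborel (\<lambda>x. ennreal (f x))"

lemma Dm_prob: "prob_space Dm"
proof
  have "emeasure Dm (space Dm) = (\<integral>\<^sup>+ x. ennreal (f x) \<partial>lborel)"
    unfolding Dm_def by (simp add: emeasure_density)
  also have "\<dots> = ennreal (LINT x|lborel. f x)"
    using f_int f_nonneg by (intro nn_integral_eq_integral) auto
  finally show "emeasure Dm (space Dm) = 1" using f_prob by simp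
qed

lemma sets_Dm[simp]: "sets Dm = sets borel" unfolding Dm_def by simp

lemma mDm: "(\<lambda>x::real. max x 0) \<in> borel_measurable Dm"
  by (subst measurable_cong_sets[OF sets_Dm refl]) simp

lemma Dm_max: "integrable Dm (\<lambda>x. max x 0)" "(\<integral>x. max x 0 \<partial>Dm) = (LINT x|lborel. x * f x)"
proof -
  have eq: "f x * max x 0 = x * f x" for x
    using f_pos_support[of x] by (auto simp: max_def)
  show "integrable Dm (\<lambda>x. max x 0)"
    unfolding Dm_def using f_nonneg f_mean
    by (subst integrable_density) (auto simp: eq)
  show "(\<integral>x. max x 0 \<partial>Dm) = (LINT x|lborel. x * f x)"
    unfolding Dm_def using f_nonneg
    by (subst integral_density) (auto simp: eq)
qed

lemma sum_law_eq: "sum_law f m = distr (PiM {..<m} (\<lambda>_. Dm)) borel (\<lambda>l. \<Sum>i<m. l i)"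
  unfolding sum_law_def Dm_def ..

lemma sets_PDm: "sets (PiM {..<m} (\<lambda>_. Dm)) = sets (PiM {..<m} (\<lambda>_. borel))"
  by (intro sets_PiM_cong) auto

lemma meas_sum[measurable]: "(\<lambda>l. \<Sum>i<m. l i) \<in> borel_measurable (PiM {..<m} (\<lambda>_. Dm))"
  by (subst measurable_cong_sets[OF sets_PDm refl]) measurable

lemma meas_comp[measurable]: "i < m \<Longrightarrow> (\<lambda>l. l i) \<in> measurable (PiM {..<m} (\<lambda>_. Dm)) Dm"
  by (rule measurable_component_singleton) auto

lemma meas_comp'[measurable]: "i < m \<Longrightarrow> (\<lambda>l. l i) \<in> borel_measurable (PiM {..<m} (\<lambda>_. Dm))"
  by (subst measurable_cong_sets[OF sets_PDm refl]) measurable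

lemma sum_law_prob: "prob_space (sum_law f m)"
  unfolding sum_law_eq
  by (intro prob_space.prob_space_distr prob_space_PiM Dm_prob) auto

lemma sets_sum_law[simp]: "sets (sum_law f m) = sets borel"
  unfolding sum_law_eq by simp

lemma sum_law_max:
  "integrable (sum_law f m) (\<lambda>x. max x 0)"
  "(\<integral>x. max x 0 \<partial>sum_law f m) \<le> real m * (LINT x|lborel. x * f x)"
proof -
  let ?P = "PiM {..<m} (\<lambda>_. Dm)"
  have comp: "integrable ?P (\<lambda>l. max (l i) 0) \<and> (\<integral>l. max (l i) 0 \<partial>?P) = (LINT x|lborel. x * f x)"
    if "i < m" for i
  proof -
    have d: "distr ?P Dm (\<lambda>l. l i) = Dm"
      using that by (intro distr_PiM_component Dm_prob) auto
    have "integrable ?P (\<lambda>l. max (l i) 0)"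
      using Dm_max(1) integrable_distr_eq[OF meas_comp[OF that] mDm] by (subst (asm) d[symmetric]) simp
    moreover have "(\<integral>l. max (l i) 0 \<partial>?P) = (\<integral>x. max x 0 \<partial>Dm)"
      using integral_distr[OF meas_comp[OF that] mDm] d by simp
    ultimately show ?thesis using Dm_max(2) by simp
  qed
  have isum: "integrable ?P (\<lambda>l. \<Sum>i<m. max (l i) 0)"
    using comp by auto
  have bound: "max (\<Sum>i<m. l i) 0 \<le> (\<Sum>i<m. max (l i) 0)" for l :: "nat \<Rightarrow> real"
  proof -
    have "(\<Sum>i<m. l i) \<le> (\<Sum>i<m. max (l i) 0)" by (intro sum_mono) auto
    moreover have "0 \<le> (\<Sum>i<m. max (l i) 0)" by (intro sum_nonneg) auto
    ultimately show ?thesis by simp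
  qed
  have imax: "integrable ?P (\<lambda>l. max (\<Sum>i<m. l i) 0)"
  proof (rule Bochner_Integration.integrable_bound[OF isum])
    show "AE l in ?P. norm (max (\<Sum>i<m. l i) 0) \<le> norm (\<Sum>i<m. max (l i) 0)"
    proof (intro AE_I2)
      fix l :: "nat \<Rightarrow> real"
      have "0 \<le> (\<Sum>i<m. max (l i) 0)" by (intro sum_nonneg) auto
      then show "norm (max (\<Sum>i<m. l i) 0) \<le> norm (\<Sum>i<m. max (l i) 0)"
        using bound[of l] by simp
    qed
  qed simp
  show "integrable (sum_law f m) (\<lambda>x. max x 0)"
    unfolding sum_law_eq using imax by (simp add: integrable_distr_eq)
  have "(\<integral>x. max x 0 \<partial>sum_law f m) = (\<integral>l. max (\<Sum>i<m. l i) 0 \<partial>?P)"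
    unfolding sum_law_eq by (simp add: integral_distr)
  also have "\<dots> \<le> (\<integral>l. (\<Sum>i<m. max (l i) 0) \<partial>?P)"
    by (intro Bochner_Integration.integral_mono imax isum bound)
  also have "\<dots> = (\<Sum>i<m. \<integral>l. max (l i) 0 \<partial>?P)"
    using comp by (intro Bochner_Integration.integral_sum) auto
  also have "\<dots> = real m * (LINT x|lborel. x * f x)"
    using comp by simp
  finally show "(\<integral>x. max x 0 \<partial>sum_law f m) \<le> real m * (LINT x|lborel. x * f x)" .
qed

end


context
  fixes f :: "real \<Rightarrow> real"
  assumes f_meas[measurable]: "f \<in> borel_measurable borel"
    and f_nonneg: "\<And>x. f x \<ge> 0"
    and f_pos_support: "\<And>x. x \<le> 0 \<Longrightarrow> f x = 0"
    and f_int: "integrable lborel f"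
    and f_prob: "(LINT x|lborel. f x) = 1"
    and f_mean: "integrable lborel (\<lambda>x. x * f x)"
begin

lemmas fas = f_meas f_nonneg f_pos_support f_int f_prob f_mean

lemma space_sum_law[simp]: "space (sum_law f m) = UNIV"
  using sets_eq_imp_space_eq[OF sets_sum_law[OF fas]] by simp

lemma K1_space: "sum_law f m \<bind> exp_law \<in> space (subprob_algebra borel)"
proof -
  have m: "exp_law \<in> measurable (sum_law f m) (subprob_algebra borel)"
    using exp_law_measurable by (subst measurable_cong_sets[OF sets_sum_law[OF fas] refl])
  have "subprob_space (sum_law f m \<bind> exp_law)"
    using sum_law_prob[OF fas] m by (intro subprob_space_bind prob_space_imp_subprob_space)
  moreover have "sets (sum_law f m \<bind> exp_law) = sets borel"
    by (rule sets_bind) (auto simp: sets_sum_law[OF fas])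
  ultimately show ?thesis by (simp add: space_subprob_algebra)
qed

lemma K1_bound:
  assumes TTL: "TTL \<ge> 0"
  shows "emeasure (sum_law f m \<bind> exp_law) {.. ereal TTL}
     \<le> ennreal (1 - exp (- real m * (LINT x|lborel. x * f x) * TTL))"
proof -
  interpret S: prob_space "sum_law f m" by (rule sum_law_prob[OF fas])
  have m: "exp_law \<in> measurable (sum_law f m) (subprob_algebra borel)"
    using exp_law_measurable by (subst measurable_cong_sets[OF sets_sum_law[OF fas] refl])
  have mb[measurable]: "h \<in> borel_measurable borel \<Longrightarrow> h \<in> borel_measurable (sum_law f m)" for h :: "real \<Rightarrow> real"
    by (subst measurable_cong_sets[OF sets_sum_law[OF fas] refl])
  let ?Y = "\<lambda>x. max x 0 * TTL"
  have iY: "integrable (sum_law f m) ?Y"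
    using sum_law_max(1)[OF fas] by simp
  have iE: "integrable (sum_law f m) (\<lambda>x. exp (- ?Y x))"
  proof (rule S.integrable_const_bound[where B=1])
    show "AE x in sum_law f m. norm (exp (- ?Y x)) \<le> 1"
      using TTL by (intro AE_I2) auto
  qed (intro mb, measurable)
  have ih: "integrable (sum_law f m) (\<lambda>x. 1 - exp (- ?Y x))"
    using iE by simp
  have "emeasure (sum_law f m \<bind> exp_law) {.. ereal TTL} = (\<integral>\<^sup>+x. emeasure (exp_law x) {.. ereal TTL} \<partial>sum_law f m)"
    by (rule emeasure_bind[OF _ m]) auto
  also have "\<dots> = (\<integral>\<^sup>+x. ennreal (1 - exp (- ?Y x)) \<partial>sum_law f m)"
    using TTL by (simp add: emeasure_exp_law_le)
  also have "\<dots> = ennreal (\<integral>x. 1 - exp (- ?Y x) \<partial>sum_law f m)"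
    using ih TTL by (intro nn_integral_eq_integral) auto
  also have "(\<integral>x. 1 - exp (- ?Y x) \<partial>sum_law f m) = 1 - (\<integral>x. exp (- ?Y x) \<partial>sum_law f m)"
    using iE S.prob_space by (simp add: S.prob_space)
  also have "\<dots> \<le> 1 - exp (- real m * (LINT x|lborel. x * f x) * TTL)"
  proof -
    have "exp (- real m * (LINT x|lborel. x * f x) * TTL) \<le> exp (- (\<integral>x. ?Y x \<partial>sum_law f m))"
      using sum_law_max(2)[OF fas, of m] TTL by (simp add: mult_right_mono)
    also have "\<dots> \<le> (\<integral>x. exp (- ?Y x) \<partial>sum_law f m)"
      by (rule S.exp_jensen[OF iY iE])
    finally show ?thesis by simp
  qed
  finally show ?thesis by (simp add: ennreal_leI)
qed

lemma mu_nonneg: "0 \<le> (LINT x|lborel. x * f x)"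
proof (rule integral_nonneg_AE, intro AE_I2)
  fix x show "0 \<le> x * f x" using f_nonneg[of x] f_pos_support[of x]
    by (cases "x \<le> 0") auto
qed

lemma K2_space: "measure_pmf p \<bind> (\<lambda>m. sum_law f m \<bind> exp_law) \<in> space (subprob_algebra borel)"
proof -
  have m: "(\<lambda>m. sum_law f m \<bind> exp_law) \<in> measurable (measure_pmf p) (subprob_algebra borel)"
    using K1_space by simp
  have "subprob_space (measure_pmf p \<bind> (\<lambda>m. sum_law f m \<bind> exp_law))"
    using m by (intro subprob_space_bind prob_space_imp_subprob_space[OF prob_space_measure_pmf])
  moreover have "sets (measure_pmf p \<bind> (\<lambda>m. sum_law f m \<bind> exp_law)) = sets borel"
    by (rule sets_bind) (use K1_space in \<open>auto simp: space_subprob_algebra\<close>)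
  ultimately show ?thesis by (simp add: space_subprob_algebra)
qed

lemma K2_bound:
  assumes TTL: "TTL \<ge> 0" and supp: "set_pmf p \<subseteq> {0..N}"
  shows "emeasure (measure_pmf p \<bind> (\<lambda>m. sum_law f m \<bind> exp_law)) {.. ereal TTL}
     \<le> ennreal (1 - exp (- (\<Sum>m\<in>{0..N}. real m * pmf p m) * (LINT x|lborel. x * f x) * TTL))"
proof -
  let ?mu = "LINT x|lborel. x * f x"
  have fin: "finite (set_pmf p)" using supp finite_subset by blast
  have m: "(\<lambda>m. sum_law f m \<bind> exp_law) \<in> measurable (measure_pmf p) (subprob_algebra borel)"
    using K1_space by simp
  let ?Y = "\<lambda>m::nat. real m * ?mu * TTL"
  have "emeasure (measure_pmf p \<bind> (\<lambda>m. sum_law f m \<bind> exp_law)) {.. ereal TTL}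
      = (\<integral>\<^sup>+m. emeasure (sum_law f m \<bind> exp_law) {.. ereal TTL} \<partial>p)"
    by (rule emeasure_bind[OF _ m]) auto
  also have "\<dots> \<le> (\<integral>\<^sup>+m. ennreal (1 - exp (- ?Y m)) \<partial>p)"
    by (intro nn_integral_mono) (use K1_bound[OF TTL] in \<open>simp add: mult.assoc\<close>)
  also have "\<dots> = ennreal (\<integral>m. 1 - exp (- ?Y m) \<partial>p)"
    using fin TTL mu_nonneg by (intro nn_integral_eq_integral integrable_measure_pmf_finite AE_I2) auto
  also have "(\<integral>m. 1 - exp (- ?Y m) \<partial>p) = 1 - (\<integral>m. exp (- ?Y m) \<partial>p)"
    using fin by (subst Bochner_Integration.integral_diff) (auto intro: integrable_measure_pmf_finite)
  also have "\<dots> \<le> 1 - exp (- (\<Sum>m\<in>{0..N}. real m * pmf p m) * ?mu * TTL)"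
  proof -
    have "(\<integral>m. ?Y m \<partial>p) = (\<integral>m. real m \<partial>p) * (?mu * TTL)"
      by (simp add: mult.assoc)
    also have "(\<integral>m. real m \<partial>p) = (\<Sum>m\<in>{0..N}. real m * pmf p m)"
      using supp by (subst integral_measure_pmf[of "{0..N}"]) (auto simp: mult.commute)
    finally have eqY: "(\<integral>m. ?Y m \<partial>p) = (\<Sum>m\<in>{0..N}. real m * pmf p m) * ?mu * TTL"
      by (simp add: mult.assoc)
    have jen: "exp (- (\<integral>m. ?Y m \<partial>p)) \<le> (\<integral>m. exp (- ?Y m) \<partial>p)"
      using fin by (intro measure_pmf.exp_jensen integrable_measure_pmf_finite)
    show ?thesis using jen[unfolded eqY] by (simp only: mult_minus_left)
  qed
  finally show ?thesis by (simp add: ennreal_leI)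
qed

end


theorem theorem2:
  fixes Pp :: "nat pmf" and g :: "nat \<Rightarrow> nat pmf" and f :: "real \<Rightarrow> real"
    and N :: nat and TTL :: real
  assumes Pp_supp: "set_pmf Pp \<subseteq> {1..N}"
    and g_supp: "\<And>n. set_pmf (g n) \<subseteq> {0..N}"
    and f_meas: "f \<in> borel_measurable borel"
    and f_nonneg: "\<And>x. f x \<ge> 0"
    and f_pos_support: "\<And>x. x \<le> 0 \<Longrightarrow> f x = 0"
    and f_int: "integrable lborel f"
    and f_prob: "(LINT x|lborel. f x) = 1"
    and f_mean: "integrable lborel (\<lambda>x. x * f x)"
    and TTL: "TTL \<ge> 0"
  shows "measure (T_law Pp g f N) {.. ereal TTL}
         \<le> 1 - (1 / Ep Pp N) *
               (\<Sum>n\<in>{1..N}. real n * exp (- gbar g N n * (LINT x|lborel. x * f x) * TTL) * pmf Pp n)"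
proof -
  note fas = f_meas f_nonneg f_pos_support f_int f_prob f_mean
  let ?mu = "LINT x|lborel. x * f x"
  let ?e = "\<lambda>n. exp (- gbar g N n * ?mu * TTL)"
  let ?K = "\<lambda>n. measure_pmf (g n) \<bind> (\<lambda>m. sum_law f m \<bind> exp_law)"
  let ?E = "Ep Pp N"
  let ?w = "\<lambda>n. real n * pmf Pp n / ?E"
  have mu: "0 \<le> ?mu" by (rule mu_nonneg[OF fas])
  have gb: "0 \<le> gbar g N n" for n unfolding gbar_def by (intro sum_nonneg) auto
  have e1: "?e n \<le> 1" for n using mu gb[of n] TTL by (simp add: mult_nonneg_nonneg)
  have Epos: "0 < ?E"
  proof -
    obtain n where n: "n \<in> set_pmf Pp" using set_pmf_not_empty by fast
    then have nN: "n \<in> {1..N}" using Pp_supp by auto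
    have "0 < real n * pmf Pp n" using n nN by (simp add: pmf_positive)
    also have "\<dots> \<le> ?E" unfolding Ep_def
      by (rule member_le_sum[OF nN]) auto
    finally show ?thesis .
  qed
  have w0: "0 \<le> ?w n" for n using Epos by simp
  have p0: "0 \<le> ?w n * (1 - ?e n)" for n
    by (rule mult_nonneg_nonneg[OF w0]) (use e1[of n] in linarith)
  have sets_Np: "sets (Np_law Pp N) = sets (count_space UNIV)"
    unfolding Np_law_def by simp
  have space_Np: "space (Np_law Pp N) = UNIV"
    using sets_eq_imp_space_eq[OF sets_Np] by simp
  have mK: "?K \<in> measurable (Np_law Pp N) (subprob_algebra borel)"
    by (subst measurable_cong_sets[OF sets_Np refl]) (use K2_space[OF fas] in auto)
  have "emeasure (T_law Pp g f N) {.. ereal TTL} = (\<integral>\<^sup>+n. emeasure (?K n) {.. ereal TTL} \<partial>Np_law Pp N)"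
    unfolding T_law_def by (rule emeasure_bind[OF _ mK]) (auto simp: space_Np)
  also have "\<dots> \<le> (\<integral>\<^sup>+n. ennreal (1 - ?e n) \<partial>Np_law Pp N)"
    by (intro nn_integral_mono) (use K2_bound[OF fas TTL g_supp] in \<open>simp add: gbar_def\<close>)
  also have "\<dots> = (\<integral>\<^sup>+n. ennreal (?w n) * ennreal (1 - ?e n) \<partial>count_space UNIV)"
    unfolding Np_law_def by (subst nn_integral_density) auto
  also have "\<dots> = (\<Sum>n\<in>{1..N}. ennreal (?w n) * ennreal (1 - ?e n))"
  proof (rule nn_integral_count_space')
    fix n assume "n \<notin> {1..N}"
    then have "pmf Pp n = 0" using Pp_supp by (auto simp: set_pmf_eq)
    then show "ennreal (?w n) * ennreal (1 - ?e n) = 0" by simp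
  qed auto
  also have "\<dots> = (\<Sum>n\<in>{1..N}. ennreal (?w n * (1 - ?e n)))"
  proof (intro sum.cong refl)
    fix n show "ennreal (?w n) * ennreal (1 - ?e n) = ennreal (?w n * (1 - ?e n))"
      by (rule ennreal_mult[symmetric]) (use w0 e1 in auto)
  qed
  also have "\<dots> = ennreal (\<Sum>n\<in>{1..N}. ?w n * (1 - ?e n))"
    by (rule sum_ennreal) (rule p0)
  finally have le: "emeasure (T_law Pp g f N) {.. ereal TTL} \<le> ennreal (\<Sum>n\<in>{1..N}. ?w n * (1 - ?e n))" .
  have r0: "0 \<le> (\<Sum>n\<in>{1..N}. ?w n * (1 - ?e n))"
    by (intro sum_nonneg p0)
  have "measure (T_law Pp g f N) {.. ereal TTL} \<le> (\<Sum>n\<in>{1..N}. ?w n * (1 - ?e n))"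
    unfolding measure_def using enn2real_mono[OF le] r0 by simp
  also have "(\<Sum>n\<in>{1..N}. ?w n * (1 - ?e n)) = (\<Sum>n\<in>{1..N}. ?w n) - (\<Sum>n\<in>{1..N}. ?w n * ?e n)"
    by (simp add: right_diff_distrib sum_subtractf)
  also have "(\<Sum>n\<in>{1..N}. ?w n) = 1"
    using Epos by (simp add: sum_divide_distrib[symmetric] Ep_def)
  also have "(\<Sum>n\<in>{1..N}. ?w n * ?e n) = (1 / ?E) * (\<Sum>n\<in>{1..N}. real n * ?e n * pmf Pp n)"
    by (simp add: sum_distrib_left mult_ac)
  finally show ?thesis .
qed

end
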